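(* Fix $\mathbf{x}_0\in\mathcal{X}^*$. Consider the mechanism $M$ that on prompt dataset $D$ does the following: set $\mathbf{x}\gets\mathbf{x}_0$ and $\hat\theta\gets\theta+\mathrm{Laplace}(\sigma)$; then repeat: compute $Z=\{\mathrm{logits}(\mathbf{p}\mathbf{x}):\mathbf{p}\in D\}$, $\mathbf{z}_{\mathrm{pub}}=\mathrm{logits}(\mathbf{p}_{\mathrm{pub}}\mathbf{x})$, $\hat d=\mathrm{d}(Z,\mathbf{z}_{\mathrm{pub}})+\mathrm{Laplace}(2\sigma)$ (fresh noise each time); if $\hat d\ge\hat\theta$, stop and output $\mathbf{x}$; otherwise sample $x\sim\mathrm{softmax}(\mathbf{z}_{\mathrm{pub}}/\tau_{\mathrm{pub}})$, append $x$ to $\mathbf{x}$, and repeat. Then $M$ satisfies $\rho$-zCDP with $\rho=\frac{2}{(s\sigma)^2}$.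
   Context: $\mathcal{X}$ is a finite token vocabulary of size $v$; $\mathcal{X}^*$ denotes finite token sequences; juxtaposition denotes concatenation. $\mathrm{logits}:\mathcal{X}^*\to\mathbb{R}^v$ is an arbitrary fixed function, $\mathbf{p}_{\mathrm{pub}}\in\mathcal{X}^*$ a fixed public prompt, and $s,\sigma,\tau_{\mathrm{pub}}>0$, $\theta\in\mathbb{R}$ fixed. $p_{\mathbf{z}}=\mathrm{softmax}(\mathbf{z})$ is the probability vector with entries $e^{z_i}/\sum_je^{z_j}$, and $\mathrm{d}(Z,\mathbf{z})=\left\|\frac1s\sum_{\mathbf{z}'\in Z}p_{\mathbf{z}'}-p_{\mathbf{z}}\right\|_1$. $\mathrm{Laplace}(b)$ is an independent Laplace random variable with mean $0$ and scale $b$. A prompt dataset is a finite set of prompts; $D,D'$ are neighbors if $D=D'\cup\{\mathbf{p}\}$ or $D'=D\cup\{\mathbf{p}\}$. A mechanism $M$ satisfies $\rho$-zCDP if $D_\alpha(M(D)\|M(D'))\le\rho\alpha$ for all $\alpha>1$ and all neighbors $D,D'$, with $D_\alpha$ the Rényi divergence of order $\alpha$. *)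

theory Defs
  imports "HOL-Probability.Probability"
begin

text \<open>Tokens: a finite type 'a (the vocabulary, v = CARD('a)); sequences: 'a list;
 concatenation: @. Logit vectors: functions 'a \<Rightarrow> real (vectors in R^v).\<close>

definition softmax :: "('a::finite \<Rightarrow> real) \<Rightarrow> 'a \<Rightarrow> real" where
  "softmax z i = exp (z i) / (\<Sum>j\<in>UNIV. exp (z j))"

definition softmax_pmf :: "('a::finite \<Rightarrow> real) \<Rightarrow> 'a pmf" where
  "softmax_pmf z = embed_pmf (softmax z)"

definition dist_d :: "real \<Rightarrow> ('a::finite \<Rightarrow> real) set \<Rightarrow> ('a \<Rightarrow> real) \<Rightarrow> real" where
  "dist_d s Z z = (\<Sum>i\<in>UNIV. \<bar>(1 / s) * (\<Sum>z'\<in>Z. softmax z' i) - softmax z i\<bar>)"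

definition laplace_measure :: "real \<Rightarrow> real \<Rightarrow> real measure" where
  "laplace_measure mu b = density lborel (\<lambda>x. ennreal (exp (- \<bar>x - mu\<bar> / b) / (2 * b)))"

text \<open>Probability that u + Laplace(b) \<ge> t, i.e. P(Laplace(b) \<ge> t - u).\<close>
definition lap_ge :: "real \<Rightarrow> real \<Rightarrow> real" where
  "lap_ge b c = measure (laplace_measure 0 b) {c..}"

text \<open>The loop of the mechanism for a fixed (already noised) threshold t.
 In each round: d_hat = d(Z, z_pub) + Laplace(2 sigma) with fresh noise; stop iff d_hat \<ge> t
 (an event of probability lap_ge (2 sigma) (t - d(Z,z_pub))); otherwise sample the next
 token from softmax(z_pub / tau_pub) and continue.\<close>
partial_function (spmf) svt_loop ::
  "('a::finite list \<Rightarrow> 'a \<Rightarrow> real) \<Rightarrow> 'a list \<Rightarrow> real \<Rightarrow> real \<Rightarrow> real \<Rightarrow>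
   'a list set \<Rightarrow> real \<Rightarrow> 'a list \<Rightarrow> 'a list spmf" where
  "svt_loop logits ppub s \<sigma> \<tau> D t x =
     (let Z = (\<lambda>p. logits (p @ x)) ` D;
          zpub = logits (ppub @ x)
      in bind_spmf (spmf_of_pmf (bernoulli_pmf (lap_ge (2 * \<sigma>) (t - dist_d s Z zpub))))
           (\<lambda>stop. if stop then return_spmf x
                   else bind_spmf (spmf_of_pmf (softmax_pmf (\<lambda>i. zpub i / \<tau>)))
                          (\<lambda>y. svt_loop logits ppub s \<sigma> \<tau> D t (x @ [y]))))"

definition svt_mech ::
  "('a::finite list \<Rightarrow> 'a \<Rightarrow> real) \<Rightarrow> 'a list \<Rightarrow> real \<Rightarrow> real \<Rightarrow> real \<Rightarrow> real \<Rightarrow>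
   'a list \<Rightarrow> 'a list set \<Rightarrow> 'a list measure" where
  "svt_mech logits ppub s \<sigma> \<tau> \<theta> x0 D =
     laplace_measure \<theta> \<sigma> \<bind> (\<lambda>t. measure_spmf (svt_loop logits ppub s \<sigma> \<tau> D t x0))"

definition renyi_div :: "real \<Rightarrow> 'b measure \<Rightarrow> 'b measure \<Rightarrow> ereal" where
  "renyi_div \<alpha> P Q =
     (let S = (\<integral>\<^sup>+ x. ennreal (measure P {x} powr \<alpha> * measure Q {x} powr (1 - \<alpha>)) \<partial>count_space UNIV)
      in if (\<exists>x. measure P {x} > 0 \<and> measure Q {x} = 0) \<or> S = \<infinity> then \<infinity>
         else ereal (ln (enn2real S) / (\<alpha> - 1)))"

definition neighbors :: "'a list set \<Rightarrow> 'a list set \<Rightarrow> bool" where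
  "neighbors D D' \<longleftrightarrow> (\<exists>p. D = D' \<union> {p} \<or> D' = D \<union> {p})"

definition zCDP :: "('a list set \<Rightarrow> 'b measure) \<Rightarrow> real \<Rightarrow> bool" where
  "zCDP M \<rho> \<longleftrightarrow> (\<forall>\<alpha>>1. \<forall>D D'. finite D \<and> finite D' \<and> neighbors D D' \<longrightarrow>
       renyi_div \<alpha> (M D) (M D') \<le> ereal (\<rho> * \<alpha>))"

end

theory Submission
  imports Defs "HOL-Probability.Probability"
begin


definition lapd :: "real \<Rightarrow> real \<Rightarrow> real \<Rightarrow> real" where
  "lapd mu b x = exp (- \<bar>x - mu\<bar> / b) / (2 * b)"

lemma lapd_meas[measurable]: "lapd mu b \<in> borel_measurable borel"
  unfolding lapd_def[abs_def] by measurable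

lemma lapd_nonneg: "b > 0 \<Longrightarrow> lapd mu b x \<ge> 0"
  by (simp add: lapd_def)

lemma laplace_measure_eq: "laplace_measure mu b = density lborel (\<lambda>x. ennreal (lapd mu b x))"
  by (simp add: laplace_measure_def lapd_def)

lemma int_expd: assumes "b > 0" shows "(\<integral>\<^sup>+x. ennreal (exponential_density (1/b) x) \<partial>lborel) = 1"
proof -
  interpret prob_space "density lborel (exponential_density (1/b))"
    using prob_space_exponential_density[of "1/b"] assms by simp
  have "emeasure (density lborel (exponential_density (1/b))) UNIV = 1"
    using emeasure_space_1 by simp
  then show ?thesis by (simp add: emeasure_density)
qed

lemma lap_total: assumes b: "b > 0" shows "emeasure (laplace_measure mu b) UNIV \<le> 1"
proof -
  let ?e = "\<lambda>x. exponential_density (1/b) x"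
  have "emeasure (laplace_measure mu b) UNIV = (\<integral>\<^sup>+x. ennreal (lapd mu b x) \<partial>lborel)"
    by (simp add: laplace_measure_eq emeasure_density)
  also have "\<dots> \<le> (\<integral>\<^sup>+x. ennreal (?e (x - mu) / 2) + ennreal (?e (mu - x) / 2) \<partial>lborel)"
  proof (rule nn_integral_mono)
    fix x
    have "lapd mu b x \<le> ?e (x - mu) / 2 + ?e (mu - x) / 2"
      using b by (auto simp: lapd_def exponential_density_def abs_if field_simps)
    moreover have "?e (x - mu) \<ge> 0" "?e (mu - x) \<ge> 0" using b by (auto intro!: exponential_density_nonneg)
    ultimately show "ennreal (lapd mu b x) \<le> ennreal (?e (x - mu) / 2) + ennreal (?e (mu - x) / 2)"
      by (simp add: ennreal_plus[symmetric] del: ennreal_plus)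
  qed
  also have "\<dots> = (\<integral>\<^sup>+x. ennreal (?e (x - mu) / 2) \<partial>lborel) + (\<integral>\<^sup>+x. ennreal (?e (mu - x) / 2) \<partial>lborel)"
    by (rule nn_integral_add) auto
  also have "(\<integral>\<^sup>+x. ennreal (?e (x - mu) / 2) \<partial>lborel) = (\<integral>\<^sup>+x. ennreal (?e x / 2) \<partial>lborel)"
    using nn_integral_real_affine[of "\<lambda>x. ennreal (?e (x - mu) / 2)" 1 mu] by simp
  also have "(\<integral>\<^sup>+x. ennreal (?e (mu - x) / 2) \<partial>lborel) = (\<integral>\<^sup>+x. ennreal (?e x / 2) \<partial>lborel)"
    using nn_integral_real_affine[of "\<lambda>x. ennreal (?e (mu - x) / 2)" "-1" mu] by simp
  also have "(\<integral>\<^sup>+x. ennreal (?e x / 2) \<partial>lborel) = (\<integral>\<^sup>+x. ennreal (1/2) * ennreal (?e x) \<partial>lborel)"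
  proof (intro nn_integral_cong)
    fix x show "ennreal (?e x / 2) = ennreal (1/2) * ennreal (?e x)"
      by (subst ennreal_mult[symmetric]) (auto intro: exponential_density_nonneg simp: b)
  qed
  also have "\<dots> = ennreal (1/2)"
    using int_expd[OF b] by (simp add: nn_integral_cmult)
  also have "ennreal (1/2) + ennreal (1/2) = 1"
    by (subst ennreal_plus[symmetric]) simp_all
  finally show ?thesis .
qed

lemma lap_E: "emeasure (laplace_measure 0 b) {c..} = (\<integral>\<^sup>+x. ennreal (lapd 0 b x) * indicator {c..} x \<partial>lborel)"
  by (simp add: laplace_measure_eq emeasure_density)

lemma lap_E_fin: assumes "b > 0" shows "emeasure (laplace_measure 0 b) {c..} \<le> 1"
proof -
  have "emeasure (laplace_measure 0 b) {c..} \<le> emeasure (laplace_measure 0 b) UNIV"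
    by (rule emeasure_mono) (auto simp: laplace_measure_eq)
  then show ?thesis using lap_total[OF assms, of 0] by simp
qed

lemma lap_ge_ennreal: assumes "b > 0" shows "ennreal (lap_ge b c) = emeasure (laplace_measure 0 b) {c..}"
  using lap_E_fin[OF assms, of c] unfolding lap_ge_def
  by (simp add: measure_def ennreal_enn2real_if top_unique) (metis ennreal_one_neq_top top.extremum_unique)

lemma lap_ge_nonneg: "lap_ge b c \<ge> 0"
  by (simp add: lap_ge_def)

lemma lap_ge_le1: assumes "b > 0" shows "lap_ge b c \<le> 1"
  using lap_ge_ennreal[OF assms, of c] lap_E_fin[OF assms, of c]
  by (metis ennreal_le_1)

lemma lap_ge_anti: assumes "b > 0" "c \<le> c'" shows "lap_ge b c' \<le> lap_ge b c"
proof -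
  have "emeasure (laplace_measure 0 b) {c'..} \<le> emeasure (laplace_measure 0 b) {c..}"
    by (rule emeasure_mono) (auto simp: laplace_measure_eq assms)
  then show ?thesis using lap_ge_ennreal[OF assms(1)] by (metis ennreal_le_iff lap_ge_nonneg)
qed

lemma lapd_shift: assumes "b > 0" "d \<ge> 0" shows "exp (- d / b) * lapd 0 b u \<le> lapd 0 b (d + u)"
proof -
  have e: "- d / b + - \<bar>u\<bar> / b = - (d + \<bar>u\<bar>) / b" using assms by (simp add: field_simps)
  have "exp (- d / b) * exp (- \<bar>u\<bar> / b) = exp (- (d + \<bar>u\<bar>) / b)"
    by (simp only: exp_add[symmetric] e)
  also have "\<dots> \<le> exp (- \<bar>d + u\<bar> / b)"
  proof -
    have "\<bar>d + u\<bar> \<le> d + \<bar>u\<bar>" using assms by linarith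
    then have "- (d + \<bar>u\<bar>) / b \<le> - \<bar>d + u\<bar> / b" using assms by (intro divide_right_mono) auto
    then show ?thesis by (simp only: exp_le_cancel_iff)
  qed
  finally show ?thesis using assms by (simp add: lapd_def field_simps)
qed

lemma lap_ge_ratio: assumes b: "b > 0" and d: "d \<ge> 0"
  shows "exp (- d / b) * lap_ge b c \<le> lap_ge b (c + d)"
proof -
  have "ennreal (exp (- d / b) * lap_ge b c) = ennreal (exp (- d / b)) * ennreal (lap_ge b c)"
    by (intro ennreal_mult) (auto simp: lap_ge_nonneg)
  also have "\<dots> = ennreal (exp (- d / b)) * (\<integral>\<^sup>+x. ennreal (lapd 0 b x) * indicator {c..} x \<partial>lborel)"
    by (simp add: lap_ge_ennreal[OF b] lap_E)
  also have "\<dots> = (\<integral>\<^sup>+x. ennreal (exp (- d / b) * lapd 0 b x) * indicator {c..} x \<partial>lborel)"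
    by (subst nn_integral_cmult[symmetric]) (auto intro!: nn_integral_cong simp: ennreal_mult lapd_nonneg[OF b] mult.assoc)
  also have "\<dots> \<le> (\<integral>\<^sup>+x. ennreal (lapd 0 b (d + x)) * indicator {c + d..} (d + x) \<partial>lborel)"
    using lapd_shift[OF b d] by (intro nn_integral_mono) (auto simp: indicator_def intro!: ennreal_leI)
  also have "\<dots> = (\<integral>\<^sup>+x. ennreal (lapd 0 b x) * indicator {c + d..} x \<partial>lborel)"
    using nn_integral_real_affine[of "\<lambda>x. ennreal (lapd 0 b x) * indicator {c + d..} x" 1 d] by simp
  also have "\<dots> = ennreal (lap_ge b (c + d))"
    by (simp add: lap_ge_ennreal[OF b] lap_E)
  finally show ?thesis by (simp add: lap_ge_nonneg)
qed

lemma lap_ge_pos: assumes b: "b > 0" shows "lap_ge b c > 0"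
proof -
  define m where "m = exp (- (\<bar>c\<bar> + 1) / b) / (2 * b)"
  have m: "m > 0" using b by (simp add: m_def)
  have "ennreal m = (\<integral>\<^sup>+x. ennreal m * indicator {c..c+1} x \<partial>lborel)"
    by (simp add: nn_integral_cmult)
  also have "\<dots> \<le> (\<integral>\<^sup>+x. ennreal (lapd 0 b x) * indicator {c..} x \<partial>lborel)"
  proof (intro nn_integral_mono)
    fix x
    show "ennreal m * indicator {c..c+1} x \<le> ennreal (lapd 0 b x) * indicator {c..} x"
    proof (cases "x \<in> {c..c+1}")
      case True
      then have "\<bar>x\<bar> \<le> \<bar>c\<bar> + 1" by auto
      have h: "- (\<bar>c\<bar> + 1) / b \<le> - \<bar>x - 0\<bar> / b" using b \<open>\<bar>x\<bar> \<le> \<bar>c\<bar> + 1\<close>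
        by (intro divide_right_mono) auto
      have "m \<le> lapd 0 b x" unfolding m_def lapd_def
        apply (rule divide_right_mono) apply (subst exp_le_cancel_iff) apply (rule h) using b by simp
      then show ?thesis using True by (simp add: indicator_def ennreal_leI)
    qed (simp add: indicator_def)
  qed
  also have "\<dots> = ennreal (lap_ge b c)" by (simp add: lap_ge_ennreal[OF b] lap_E)
  finally show ?thesis using m by (metis ennreal_le_iff2 leD le_less_linear lap_ge_nonneg ennreal_less_iff order.strict_trans1 ennreal_less_zero_iff)
qed


lemma step_spmf:
  fixes \<pi> :: "'a::finite pmf"
  assumes "0 \<le> p" "p \<le> 1"
  shows "spmf (spmf_of_pmf (bernoulli_pmf p) \<bind> (\<lambda>b. if b then return_spmf x else spmf_of_pmf \<pi> \<bind> f)) y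
     = p * (if y = x then 1 else 0) + (1 - p) * (\<Sum>z\<in>UNIV. pmf \<pi> z * spmf (f z) y)"
  using assms by (simp add: pmf_bind integral_measure_pmf[of UNIV] UNIV_bool mult.commute)

lemma step_weight:
  fixes \<pi> :: "'a::finite pmf"
  assumes "0 \<le> p" "p \<le> 1"
  shows "weight_spmf (spmf_of_pmf (bernoulli_pmf p) \<bind> (\<lambda>b. if b then return_spmf x else spmf_of_pmf \<pi> \<bind> f))
     = p + (1 - p) * (\<Sum>z\<in>UNIV. pmf \<pi> z * weight_spmf (f z))"
  using assms by (simp add: weight_bind_spmf o_def integral_measure_pmf[of UNIV] UNIV_bool mult.commute del: bind_spmf_of_pmf)

lemma loop_prefix_all:
  "\<forall>logits ppub s \<sigma> \<tau> D t x. set_spmf (svt_loop logits ppub s \<sigma> \<tau> D t x) \<subseteq> {y. \<exists>w. y = x @ w}"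
proof (rule svt_loop.fixp_induct[where P="\<lambda>f. \<forall>logits ppub s \<sigma> \<tau> D t x. set_spmf (f logits ppub s \<sigma> \<tau> D t x) \<subseteq> {y. \<exists>w. y = x @ w}"])
  show "spmf.admissible (\<lambda>f. \<forall>logits ppub s \<sigma> \<tau> D t x. set_spmf (curry (curry (curry (curry (curry (curry (curry f)))))) logits ppub s \<sigma> \<tau> D t x) \<subseteq> {y. \<exists>w. y = x @ w})"
    by (intro admissible_all ccpo_class.admissible_leI mcont_const) (simp add: curry_def; intro mcont2mcont_set_spmf mcont_call)
next
  fix f :: "('a::finite list \<Rightarrow> 'a \<Rightarrow> real) \<Rightarrow> 'a list \<Rightarrow> real \<Rightarrow> real \<Rightarrow> real \<Rightarrow> 'a list set \<Rightarrow> real \<Rightarrow> 'a list \<Rightarrow> 'a list spmf"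
  assume IH: "\<forall>logits ppub s \<sigma> \<tau> D t x. set_spmf (f logits ppub s \<sigma> \<tau> D t x) \<subseteq> {y. \<exists>w. y = x @ w}"
  show "\<forall>logits ppub s \<sigma> \<tau> D t x. set_spmf ((\<lambda>a b c d e f' g h.
            let Z = (\<lambda>p. a (p @ h)) ` f'; zpub = a (b @ h)
            in spmf_of_pmf (bernoulli_pmf (lap_ge (2 * d) (g - dist_d c Z zpub))) \<bind>
               (\<lambda>stop. if stop then return_spmf h
                   else spmf_of_pmf (softmax_pmf (\<lambda>i. zpub i / e)) \<bind> (\<lambda>y. f a b c d e f' g (h @ [y])))) logits ppub s \<sigma> \<tau> D t x) \<subseteq> {y. \<exists>w. y = x @ w}"
  proof (intro allI subsetI)
    fix logits ppub s \<sigma> \<tau> D t x y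
    assume "y \<in> set_spmf ((\<lambda>a b c d e f' g h.
            let Z = (\<lambda>p. a (p @ h)) ` f'; zpub = a (b @ h)
            in spmf_of_pmf (bernoulli_pmf (lap_ge (2 * d) (g - dist_d c Z zpub))) \<bind>
               (\<lambda>stop. if stop then return_spmf h
                   else spmf_of_pmf (softmax_pmf (\<lambda>i. zpub i / e)) \<bind> (\<lambda>y. f a b c d e f' g (h @ [y])))) logits ppub s \<sigma> \<tau> D t x)"
    then have "y = x \<or> (\<exists>z. y \<in> set_spmf (f logits ppub s \<sigma> \<tau> D t (x @ [z])))"
      by (auto simp: Let_def set_bind_spmf simp del: bind_spmf_of_pmf split: if_splits)
    then show "y \<in> {y. \<exists>w. y = x @ w}"
    proof
      assume "y = x" then show ?thesis by simp
    next
      assume "\<exists>z. y \<in> set_spmf (f logits ppub s \<sigma> \<tau> D t (x @ [z]))"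
      then obtain z where "y \<in> set_spmf (f logits ppub s \<sigma> \<tau> D t (x @ [z]))" by blast
      with IH obtain w where "y = (x @ [z]) @ w" by blast
      then show ?thesis by simp
    qed
  qed
qed simp


context
  fixes logits :: "'a::finite list \<Rightarrow> 'a \<Rightarrow> real" and ppub :: "'a list" and s \<sigma> \<tau> :: real
begin

definition dd :: "'a list set \<Rightarrow> 'a list \<Rightarrow> real" where
  "dd D x = dist_d s ((\<lambda>p. logits (p @ x)) ` D) (logits (ppub @ x))"

definition stp :: "'a list set \<Rightarrow> real \<Rightarrow> 'a list \<Rightarrow> real" where
  "stp D t x = lap_ge (2 * \<sigma>) (t - dd D x)"

definition pub :: "'a list \<Rightarrow> 'a pmf" where
  "pub x = softmax_pmf (\<lambda>i. logits (ppub @ x) i / \<tau>)"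

abbreviation loop where "loop D t x \<equiv> svt_loop logits ppub s \<sigma> \<tau> D t x"

lemma loop_unfold: "loop D t x = spmf_of_pmf (bernoulli_pmf (stp D t x)) \<bind>
   (\<lambda>b. if b then return_spmf x else spmf_of_pmf (pub x) \<bind> (\<lambda>y. loop D t (x @ [y])))"
  by (subst svt_loop.simps) (unfold Let_def stp_def dd_def pub_def, rule refl)

lemma dd_nonneg: "dd D x \<ge> 0"
  by (simp add: dd_def dist_d_def sum_nonneg)

lemma stp_bounds: "\<sigma> > 0 \<Longrightarrow> 0 \<le> stp D t x \<and> stp D t x \<le> 1"
  by (simp add: stp_def lap_ge_nonneg lap_ge_le1)

lemma stp_lower: "\<sigma> > 0 \<Longrightarrow> lap_ge (2 * \<sigma>) t \<le> stp D t x"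
  unfolding stp_def by (rule lap_ge_anti) (use dd_nonneg[of D x] in auto)

lemma spmf_loop: "\<sigma> > 0 \<Longrightarrow> spmf (loop D t x) y =
   stp D t x * (if y = x then 1 else 0) + (1 - stp D t x) * (\<Sum>z\<in>UNIV. pmf (pub x) z * spmf (loop D t (x @ [z])) y)"
  by (subst loop_unfold) (rule step_spmf, auto simp: stp_bounds)

lemma weight_loop_eq: "\<sigma> > 0 \<Longrightarrow> weight_spmf (loop D t x) =
   stp D t x + (1 - stp D t x) * (\<Sum>z\<in>UNIV. pmf (pub x) z * weight_spmf (loop D t (x @ [z])))"
  using arg_cong[where f=weight_spmf, OF loop_unfold[of D t x]]
    step_weight[where p="stp D t x" and \<pi>="pub x" and x=x and f="\<lambda>y. loop D t (x @ [y])"] stp_bounds[of D t x]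
  by (simp del: bind_spmf_of_pmf)

lemma weight_loop_lower:
  assumes s: "\<sigma> > 0"
  shows "1 - (1 - lap_ge (2 * \<sigma>) t) ^ n \<le> weight_spmf (loop D t x)"
proof (induction n arbitrary: x)
  case 0
  then show ?case by (simp add: weight_spmf_nonneg)
next
  case (Suc n)
  define q where "q = lap_ge (2 * \<sigma>) t"
  define p where "p = stp D t x"
  have q: "0 \<le> q" "q \<le> 1" using s by (auto simp: q_def lap_ge_nonneg lap_ge_le1)
  have p: "0 \<le> p" "p \<le> 1" "q \<le> p" using stp_bounds[OF s] stp_lower[OF s] by (auto simp: p_def q_def)
  have "(\<Sum>z\<in>UNIV. pmf (pub x) z * (1 - (1 - q) ^ n)) \<le> (\<Sum>z\<in>UNIV. pmf (pub x) z * weight_spmf (loop D t (x @ [z])))"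
    by (intro sum_mono mult_left_mono) (use Suc.IH in \<open>auto simp: q_def\<close>)
  moreover have "(\<Sum>z\<in>UNIV. pmf (pub x) z * (1 - (1 - q) ^ n)) = 1 - (1 - q) ^ n"
    by (simp add: sum_distrib_right[symmetric] sum_pmf_eq_1)
  ultimately have A: "1 - (1 - q) ^ n \<le> (\<Sum>z\<in>UNIV. pmf (pub x) z * weight_spmf (loop D t (x @ [z])))" by simp
  have "1 - (1 - q) ^ Suc n \<le> p + (1 - p) * (1 - (1 - q) ^ n)"
  proof -
    have "(1 - p) * (1 - q) ^ n \<le> (1 - q) * (1 - q) ^ n"
      using p q by (intro mult_right_mono) auto
    then show ?thesis by (simp add: algebra_simps)
  qed
  also have "\<dots> \<le> p + (1 - p) * (\<Sum>z\<in>UNIV. pmf (pub x) z * weight_spmf (loop D t (x @ [z])))"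
    using A p by (intro add_left_mono mult_left_mono) auto
  also have "\<dots> = weight_spmf (loop D t x)"
    unfolding p_def by (rule weight_loop_eq[OF s, symmetric])
  finally show ?case by (simp add: q_def)
qed

lemma weight_loop: assumes s: "\<sigma> > 0" shows "weight_spmf (loop D t x) = 1"
proof -
  define q where "q = lap_ge (2 * \<sigma>) t"
  have q: "0 < q" "q \<le> 1" using s by (auto simp: q_def lap_ge_pos lap_ge_le1)
  have "(\<lambda>n. 1 - (1 - q) ^ n) \<longlonglongrightarrow> 1 - 0"
    by (intro tendsto_diff tendsto_const LIMSEQ_power_zero) (use q in auto)
  then have "(\<lambda>n. 1 - (1 - q) ^ n) \<longlonglongrightarrow> 1" by simp
  then have "1 \<le> weight_spmf (loop D t x)"
    by (rule LIMSEQ_le_const2) (use weight_loop_lower[OF s] in \<open>auto simp: q_def\<close>)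
  then show ?thesis using weight_spmf_le_1[of "loop D t x"] by simp
qed

lemma loop_prefix: "set_spmf (loop D t x) \<subseteq> {y. \<exists>w. y = x @ w}"
  using loop_prefix_all by blast

lemma spmf_loop_nonprefix: "\<not> (\<exists>w. y = x @ w) \<Longrightarrow> spmf (loop D t x) y = 0"
  using loop_prefix[of D t x] by (auto simp: spmf_eq_0_set_spmf)

fun G :: "'a list set \<Rightarrow> real \<Rightarrow> 'a list \<Rightarrow> 'a list \<Rightarrow> real" where
  "G D t x [] = stp D t x"
| "G D t x (z # w) = (1 - stp D t x) * pmf (pub x) z * G D t (x @ [z]) w"

lemma spmf_loop_G: assumes s: "\<sigma> > 0" shows "spmf (loop D t x) (x @ w) = G D t x w"
proof (induction w arbitrary: x)
  case Nil
  have "spmf (loop D t (x @ [z])) x = 0" for z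
    by (rule spmf_loop_nonprefix) auto
  then show ?case by (subst spmf_loop[OF s]) simp
next
  case (Cons z0 w)
  have "pmf (pub x) z * spmf (loop D t (x @ [z])) (x @ z0 # w) =
        (if z = z0 then pmf (pub x) z0 * G D t (x @ [z0]) w else 0)" for z
  proof (cases "z = z0")
    case True
    then show ?thesis using Cons.IH[of "x @ [z0]"] by simp
  next
    case False
    then have "spmf (loop D t (x @ [z])) (x @ z0 # w) = 0"
      by (intro spmf_loop_nonprefix) auto
    then show ?thesis using False by simp
  qed
  then show ?case by (subst spmf_loop[OF s]) simp
qed

lemma G_nonneg: "\<sigma> > 0 \<Longrightarrow> G D t x w \<ge> 0"
  by (induction w arbitrary: x) (auto simp: stp_bounds)

end


lemma softmax_nonneg: "softmax z i \<ge> 0"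
  by (simp add: softmax_def sum_nonneg)

lemma softmax_sum: "(\<Sum>i\<in>UNIV. softmax (z::'a::finite \<Rightarrow> real) i) = 1"
proof -
  have "(\<Sum>j\<in>UNIV. exp (z j)) > 0" by (intro sum_pos) auto
  then show ?thesis by (simp add: softmax_def sum_divide_distrib[symmetric])
qed

lemma dist_insert:
  fixes Z :: "('a::finite \<Rightarrow> real) set"
  assumes fin: "finite Z" and s: "s > 0"
  shows "\<bar>dist_d s (insert z0 Z) z - dist_d s Z z\<bar> \<le> 1 / s"
proof (cases "z0 \<in> Z")
  case True
  then show ?thesis using s by (simp add: insert_absorb)
next
  case False
  define a where "a i = (1 / s) * (\<Sum>z'\<in>Z. softmax z' i) - softmax z i" for i
  define e where "e i = (1 / s) * softmax z0 i" for i
  have e0: "e i \<ge> 0" for i using s by (simp add: e_def softmax_nonneg)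
  have se: "(\<Sum>i\<in>UNIV. e i) = 1 / s" by (simp add: e_def sum_divide_distrib[symmetric] softmax_sum)
  have d1: "dist_d s (insert z0 Z) z = (\<Sum>i\<in>UNIV. \<bar>a i + e i\<bar>)"
    unfolding dist_d_def a_def e_def using fin False by (simp add: algebra_simps)
  have d2: "dist_d s Z z = (\<Sum>i\<in>UNIV. \<bar>a i\<bar>)"
    unfolding dist_d_def a_def by simp
  have "(\<Sum>i\<in>UNIV. \<bar>a i + e i\<bar>) \<le> (\<Sum>i\<in>UNIV. \<bar>a i\<bar> + e i)"
    by (intro sum_mono) (use e0 in \<open>simp add: abs_triangle_ineq order_trans[OF abs_triangle_ineq]\<close>)
  moreover have "(\<Sum>i\<in>UNIV. \<bar>a i\<bar>) \<le> (\<Sum>i\<in>UNIV. \<bar>a i + e i\<bar> + e i)"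
    by (intro sum_mono) (use e0 in \<open>smt (verit)\<close>)
  ultimately show ?thesis using se by (simp add: d1 d2 sum.distrib)
qed

lemma image_insert_list: "(\<lambda>p. f (p @ x)) ` (D \<union> {q}) = insert (f (q @ x)) ((\<lambda>p. f (p @ x)) ` D)"
  by auto

context
  fixes logits :: "'a::finite list \<Rightarrow> 'a \<Rightarrow> real" and ppub :: "'a list" and s \<sigma> \<tau> :: real
begin

lemma dd_sens:
  assumes s: "s > 0" and fin: "finite D" "finite D'" and nb: "neighbors D D'"
  shows "\<bar>dd logits ppub s D x - dd logits ppub s D' x\<bar> \<le> 1 / s"
proof -
  from nb obtain q where "D = D' \<union> {q} \<or> D' = D \<union> {q}" by (auto simp: neighbors_def)
  then show ?thesis
  proof
    assume "D = D' \<union> {q}"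
    then have "(\<lambda>p. logits (p @ x)) ` D = insert (logits (q @ x)) ((\<lambda>p. logits (p @ x)) ` D')" by auto
    then show ?thesis using dist_insert[OF finite_imageI[OF fin(2)] s, of "logits (q @ x)" "\<lambda>p. logits (p @ x)" "logits (ppub @ x)"]
      unfolding dd_def by simp
  next
    assume "D' = D \<union> {q}"
    then have "(\<lambda>p. logits (p @ x)) ` D' = insert (logits (q @ x)) ((\<lambda>p. logits (p @ x)) ` D)" by auto
    then show ?thesis using dist_insert[OF finite_imageI[OF fin(1)] s, of "logits (q @ x)" "\<lambda>p. logits (p @ x)" "logits (ppub @ x)"]
      unfolding dd_def by (simp add: abs_minus_commute)
  qed
qed

lemma G_ratio:
  assumes sg: "\<sigma> > 0" and De: "\<Delta> \<ge> 0" and sens: "\<And>x. \<bar>dd logits ppub s D x - dd logits ppub s D' x\<bar> \<le> \<Delta>"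
  shows "G logits ppub s \<sigma> \<tau> D t x w \<le> exp (\<Delta> / \<sigma>) * G logits ppub s \<sigma> \<tau> D' (t + \<Delta>) x w"
proof (induction w arbitrary: x)
  case Nil
  define d where "d = dd logits ppub s D x"
  define d' where "d' = dd logits ppub s D' x"
  have dd': "\<bar>d - d'\<bar> \<le> \<Delta>" using sens by (simp add: d_def d'_def)
  have b: "2 * \<sigma> > 0" using sg by simp
  have "exp (- (2 * \<Delta>) / (2 * \<sigma>)) * lap_ge (2 * \<sigma>) (t - d) \<le> lap_ge (2 * \<sigma>) (t - d + 2 * \<Delta>)"
    by (rule lap_ge_ratio[OF b]) (use De in simp)
  also have "\<dots> \<le> lap_ge (2 * \<sigma>) (t + \<Delta> - d')"
    by (rule lap_ge_anti[OF b]) (use dd' in linarith)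
  finally have "exp (- \<Delta> / \<sigma>) * lap_ge (2 * \<sigma>) (t - d) \<le> lap_ge (2 * \<sigma>) (t + \<Delta> - d')"
    using sg by simp
  note F = this
  have E: "exp (\<Delta> / \<sigma>) * (exp (- \<Delta> / \<sigma>) * y) = y" for y
  proof -
    have "exp (\<Delta> / \<sigma>) * exp (- (\<Delta> / \<sigma>)) = 1" by (rule exp_minus_inverse)
    then show ?thesis by (simp add: mult.assoc[symmetric])
  qed
  have "lap_ge (2 * \<sigma>) (t - d) = exp (\<Delta> / \<sigma>) * (exp (- \<Delta> / \<sigma>) * lap_ge (2 * \<sigma>) (t - d))"
    by (rule E[symmetric])
  also have "\<dots> \<le> exp (\<Delta> / \<sigma>) * lap_ge (2 * \<sigma>) (t + \<Delta> - d')"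
    by (rule mult_left_mono[OF F]) simp
  finally show ?case by (simp add: stp_def d_def d'_def)
next
  case (Cons z w)
  define d where "d = dd logits ppub s D x"
  define d' where "d' = dd logits ppub s D' x"
  have dd': "\<bar>d - d'\<bar> \<le> \<Delta>" using sens by (simp add: d_def d'_def)
  have b: "2 * \<sigma> > 0" using sg by simp
  have st: "stp logits ppub s \<sigma> D' (t + \<Delta>) x \<le> stp logits ppub s \<sigma> D t x"
    unfolding stp_def d_def[symmetric] d'_def[symmetric] by (rule lap_ge_anti[OF b]) (use dd' in linarith)
  have "(1 - stp logits ppub s \<sigma> D t x) * pmf (pub logits ppub \<tau> x) z * G logits ppub s \<sigma> \<tau> D t (x @ [z]) w
     \<le> (1 - stp logits ppub s \<sigma> D' (t + \<Delta>) x) * pmf (pub logits ppub \<tau> x) z * (exp (\<Delta> / \<sigma>) * G logits ppub s \<sigma> \<tau> D' (t + \<Delta>) (x @ [z]) w)"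
    by (intro mult_mono Cons.IH) (use st stp_bounds[OF sg, of logits ppub s D' "t + \<Delta>" x] stp_bounds[OF sg, of logits ppub s D t x] G_nonneg[OF sg] in \<open>auto intro: mult_nonneg_nonneg\<close>)
  then show ?case by (simp add: algebra_simps)
qed

lemma stp_meas: assumes sg: "\<sigma> > 0" shows "(\<lambda>t. stp logits ppub s \<sigma> D t x) \<in> borel_measurable borel"
proof -
  have "mono (\<lambda>t. - stp logits ppub s \<sigma> D t x)"
    unfolding mono_def stp_def using sg by (auto intro!: lap_ge_anti)
  then have "(\<lambda>t. - stp logits ppub s \<sigma> D t x) \<in> borel_measurable borel" by (rule borel_measurable_mono)
  then have "(\<lambda>t. - (- stp logits ppub s \<sigma> D t x)) \<in> borel_measurable borel" by measurable
  then show ?thesis by simp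
qed

lemma G_meas: assumes sg: "\<sigma> > 0" shows "(\<lambda>t. G logits ppub s \<sigma> \<tau> D t x w) \<in> borel_measurable borel"
proof (induction w arbitrary: x)
  case Nil
  then show ?case using stp_meas[OF sg] by simp
next
  case (Cons z w)
  note [measurable] = stp_meas[OF sg] Cons.IH
  show ?case by simp measurable
qed

end


lemma A1: "emeasure (measure_spmf p) A = (\<integral>\<^sup>+y. ennreal (spmf p y) * indicator A y \<partial>count_space UNIV)"
  by (simp add: nn_integral_measure_spmf[symmetric] nn_integral_indicator[symmetric] del: nn_integral_indicator)

lemma A2: fixes h :: "real \<Rightarrow> 'a::countable \<Rightarrow> real"
  assumes hm: "\<And>y. (\<lambda>t. h t y) \<in> borel_measurable borel"
  shows "(\<lambda>p. ennreal (h (fst p) (snd p)) * indicator A (snd p)) \<in> borel_measurable (borel \<Otimes>\<^sub>M count_space UNIV)"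
proof (rule measurable_compose_countable'[where f="\<lambda>y p. ennreal (h (fst p) y) * indicator A y" and g=snd and I=UNIV])
  fix y
  have m1: "(\<lambda>p. h (fst p) y) \<in> borel_measurable (borel \<Otimes>\<^sub>M count_space UNIV)"
    by (rule measurable_compose[OF measurable_fst hm])
  have m2: "(\<lambda>p. ennreal (h (fst p) y)) \<in> borel_measurable (borel \<Otimes>\<^sub>M count_space UNIV)"
    by (rule measurable_compose[OF m1 measurable_ennreal])
  show "(\<lambda>p. ennreal (h (fst p) y) * indicator A y) \<in> borel_measurable (borel \<Otimes>\<^sub>M count_space UNIV)"
    by (rule borel_measurable_times_ennreal[OF m2 measurable_const]) simp
qed auto

lemma A3: fixes h :: "real \<Rightarrow> 'a::countable \<Rightarrow> real"
  assumes hm: "\<And>y. (\<lambda>t. h t y) \<in> borel_measurable borel"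
  shows "(\<lambda>t. \<integral>\<^sup>+y. ennreal (h t y) * indicator A y \<partial>count_space UNIV) \<in> borel_measurable borel"
proof -
  have s: "sigma_finite_measure (count_space (UNIV :: 'a set))"
    by (rule sigma_finite_measure_count_space_countable) simp
  show ?thesis
    by (rule sigma_finite_measure.borel_measurable_nn_integral[OF s]) (use A2[OF hm, where A=A] in simp)
qed

context
  fixes logits :: "'a::finite list \<Rightarrow> 'a \<Rightarrow> real" and ppub :: "'a list" and s \<sigma> \<tau> \<theta> :: real and x0 :: "'a list"
begin

definition hh :: "'a list set \<Rightarrow> real \<Rightarrow> 'a list \<Rightarrow> real" where
  "hh D t y = spmf (svt_loop logits ppub s \<sigma> \<tau> D t x0) y"

lemma hh_eq: assumes sg: "\<sigma> > 0"
  shows "hh D t y = (if \<exists>w. y = x0 @ w then G logits ppub s \<sigma> \<tau> D t x0 (drop (length x0) y) else 0)"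
proof (cases "\<exists>w. y = x0 @ w")
  case True
  then obtain w where "y = x0 @ w" by blast
  then show ?thesis using spmf_loop_G[OF sg, of logits ppub s \<tau> D t x0 w] by (simp add: hh_def)
qed (simp add: hh_def spmf_loop_nonprefix)

lemma hh_meas[measurable]: assumes sg: "\<sigma> > 0" shows "(\<lambda>t. hh D t y) \<in> borel_measurable borel"
  unfolding hh_eq[OF sg] using G_meas[OF sg] by (cases "\<exists>w. y = x0 @ w") auto

lemma hh_nonneg: "hh D t y \<ge> 0" by (simp add: hh_def)

lemma kernel_meas: assumes sg: "\<sigma> > 0"
  shows "(\<lambda>t. measure_spmf (svt_loop logits ppub s \<sigma> \<tau> D t x0)) \<in> measurable (laplace_measure \<theta> \<sigma>) (subprob_algebra (count_space UNIV))"
proof -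
  have "(\<lambda>t. measure_spmf (svt_loop logits ppub s \<sigma> \<tau> D t x0)) \<in> measurable borel (subprob_algebra (count_space UNIV))"
  proof (rule measurable_subprob_algebra)
    fix A :: "'a list set"
    show "(\<lambda>t. emeasure (measure_spmf (svt_loop logits ppub s \<sigma> \<tau> D t x0)) A) \<in> borel_measurable borel"
      unfolding A1 hh_def[symmetric] by (rule A3[OF hh_meas[OF sg]])
  qed simp_all
  moreover have "sets (laplace_measure \<theta> \<sigma>) = sets borel" by (simp add: laplace_measure_def)
  ultimately show ?thesis by (subst measurable_cong_sets[OF _ refl])
qed

abbreviation MM where "MM D \<equiv> svt_mech logits ppub s \<sigma> \<tau> \<theta> x0 D"

lemma space_lap: "space (laplace_measure \<theta> \<sigma>) = UNIV" by (simp add: laplace_measure_def)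

lemma sets_MM: assumes sg: "\<sigma> > 0" shows "sets (MM D) = sets (count_space UNIV)"
  unfolding svt_mech_def by (rule sets_bind) (auto simp: space_lap)

lemma MM_single: assumes sg: "\<sigma> > 0"
  shows "emeasure (MM D) {y} = (\<integral>\<^sup>+t. ennreal (lapd \<theta> \<sigma> t) * ennreal (hh D t y) \<partial>lborel)"
proof -
  have "emeasure (MM D) {y} = (\<integral>\<^sup>+t. emeasure (measure_spmf (svt_loop logits ppub s \<sigma> \<tau> D t x0)) {y} \<partial>laplace_measure \<theta> \<sigma>)"
    unfolding svt_mech_def by (rule emeasure_bind[OF _ kernel_meas[OF sg]]) (auto simp: space_lap)
  also have "\<dots> = (\<integral>\<^sup>+t. ennreal (hh D t y) \<partial>laplace_measure \<theta> \<sigma>)"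
    by (simp add: emeasure_spmf_single hh_def)
  also have "\<dots> = (\<integral>\<^sup>+t. ennreal (lapd \<theta> \<sigma> t) * ennreal (hh D t y) \<partial>lborel)"
    unfolding laplace_measure_eq using hh_meas[OF sg] by (subst nn_integral_density) auto
  finally show ?thesis .
qed

lemma MM_total: assumes sg: "\<sigma> > 0"
  shows "emeasure (MM D) UNIV = emeasure (laplace_measure \<theta> \<sigma>) UNIV"
proof -
  have "emeasure (MM D) UNIV = (\<integral>\<^sup>+t. emeasure (measure_spmf (svt_loop logits ppub s \<sigma> \<tau> D t x0)) UNIV \<partial>laplace_measure \<theta> \<sigma>)"
    unfolding svt_mech_def by (rule emeasure_bind[OF _ kernel_meas[OF sg]]) (auto simp: space_lap)
  also have "\<dots> = (\<integral>\<^sup>+t. 1 \<partial>laplace_measure \<theta> \<sigma>)"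
  proof (intro nn_integral_cong)
    fix t
    have "weight_spmf (svt_loop logits ppub s \<sigma> \<tau> D t x0) = 1" by (rule weight_loop[OF sg])
    then show "emeasure (measure_spmf (svt_loop logits ppub s \<sigma> \<tau> D t x0)) UNIV = 1"
      by (simp add: measure_spmf.emeasure_eq_measure weight_spmf_def)
  qed
  also have "\<dots> = emeasure (laplace_measure \<theta> \<sigma>) UNIV" by (simp add: space_lap)
  finally show ?thesis .
qed

end


lemma lapd_ratio: assumes sg: "\<sigma> > 0" and De: "\<Delta> \<ge> 0"
  shows "lapd \<theta> \<sigma> t \<le> exp (\<Delta> / \<sigma>) * lapd \<theta> \<sigma> (t + \<Delta>)"
proof -
  have "\<bar>t + \<Delta> - \<theta>\<bar> \<le> \<bar>t - \<theta>\<bar> + \<Delta>" using De by linarith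
  then have "- \<bar>t - \<theta>\<bar> / \<sigma> \<le> \<Delta> / \<sigma> + - \<bar>t + \<Delta> - \<theta>\<bar> / \<sigma>"
    using sg by (simp add: field_simps)
  then have "exp (- \<bar>t - \<theta>\<bar> / \<sigma>) \<le> exp (\<Delta> / \<sigma> + - \<bar>t + \<Delta> - \<theta>\<bar> / \<sigma>)"
    by (simp only: exp_le_cancel_iff)
  also have "\<dots> = exp (\<Delta> / \<sigma>) * exp (- \<bar>t + \<Delta> - \<theta>\<bar> / \<sigma>)" by (rule exp_add)
  finally have E: "exp (- \<bar>t - \<theta>\<bar> / \<sigma>) \<le> exp (\<Delta> / \<sigma>) * exp (- \<bar>t + \<Delta> - \<theta>\<bar> / \<sigma>)" .
  show ?thesis unfolding lapd_def using divide_right_mono[OF E, of "2 * \<sigma>"] sg by simp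
qed

context
  fixes logits :: "'a::finite list \<Rightarrow> 'a \<Rightarrow> real" and ppub :: "'a list" and s \<sigma> \<tau> \<theta> :: real and x0 :: "'a list"
begin

lemma hh_ratio:
  assumes sg: "\<sigma> > 0" and De: "\<Delta> \<ge> 0" and sens: "\<And>x. \<bar>dd logits ppub s D x - dd logits ppub s D' x\<bar> \<le> \<Delta>"
  shows "hh logits ppub s \<sigma> \<tau> x0 D t y \<le> exp (\<Delta> / \<sigma>) * hh logits ppub s \<sigma> \<tau> x0 D' (t + \<Delta>) y"
  unfolding hh_eq[OF sg] using G_ratio[OF sg De sens] by simp

lemma MM_ratio:
  assumes sg: "\<sigma> > 0" and s: "s > 0" and fin: "finite D" "finite D'" and nb: "neighbors D D'"
  shows "emeasure (svt_mech logits ppub s \<sigma> \<tau> \<theta> x0 D) {y} \<le> ennreal (exp (2 / (s * \<sigma>))) * emeasure (svt_mech logits ppub s \<sigma> \<tau> \<theta> x0 D') {y}"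
proof -
  define \<Delta> where "\<Delta> = 1 / s"
  have De: "\<Delta> \<ge> 0" using s by (simp add: \<Delta>_def)
  have sens: "\<And>x. \<bar>dd logits ppub s D x - dd logits ppub s D' x\<bar> \<le> \<Delta>"
    unfolding \<Delta>_def by (rule dd_sens[OF s fin nb])
  define F where "F t = ennreal (lapd \<theta> \<sigma> t) * ennreal (hh logits ppub s \<sigma> \<tau> x0 D' t y)" for t
  have Fm: "F \<in> borel_measurable borel"
  proof -
    have m1: "(\<lambda>t. ennreal (lapd \<theta> \<sigma> t)) \<in> borel_measurable borel"
      by (rule measurable_compose[OF lapd_meas measurable_ennreal])
    have m2: "(\<lambda>t. ennreal (hh logits ppub s \<sigma> \<tau> x0 D' t y)) \<in> borel_measurable borel"
      by (rule measurable_compose[OF hh_meas[OF sg] measurable_ennreal])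
    show ?thesis unfolding F_def[abs_def] by (rule borel_measurable_times_ennreal[OF m1 m2])
  qed
  define c where "c = exp (\<Delta> / \<sigma>) * exp (\<Delta> / \<sigma>)"
  have c: "c = exp (2 / (s * \<sigma>))" unfolding c_def \<Delta>_def by (simp add: exp_add[symmetric])
  have "emeasure (svt_mech logits ppub s \<sigma> \<tau> \<theta> x0 D) {y} = (\<integral>\<^sup>+t. ennreal (lapd \<theta> \<sigma> t) * ennreal (hh logits ppub s \<sigma> \<tau> x0 D t y) \<partial>lborel)"
    by (rule MM_single[OF sg])
  also have "\<dots> \<le> (\<integral>\<^sup>+t. ennreal c * F (\<Delta> + t) \<partial>lborel)"
  proof (rule nn_integral_mono)
    fix t
    have "lapd \<theta> \<sigma> t * hh logits ppub s \<sigma> \<tau> x0 D t y \<le>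
          (exp (\<Delta> / \<sigma>) * lapd \<theta> \<sigma> (t + \<Delta>)) * (exp (\<Delta> / \<sigma>) * hh logits ppub s \<sigma> \<tau> x0 D' (t + \<Delta>) y)"
      by (intro mult_mono lapd_ratio[OF sg De] hh_ratio[OF sg De sens]) (auto simp: lapd_nonneg[OF sg] hh_nonneg)
    also have "\<dots> = c * (lapd \<theta> \<sigma> (\<Delta> + t) * hh logits ppub s \<sigma> \<tau> x0 D' (\<Delta> + t) y)"
      by (simp add: c_def algebra_simps)
    finally show "ennreal (lapd \<theta> \<sigma> t) * ennreal (hh logits ppub s \<sigma> \<tau> x0 D t y) \<le> ennreal c * F (\<Delta> + t)"
      unfolding F_def by (simp add: ennreal_mult[symmetric] lapd_nonneg[OF sg] hh_nonneg c_def ennreal_leI del: ennreal_mult)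
  qed
  also have "\<dots> = ennreal c * (\<integral>\<^sup>+t. F (\<Delta> + t) \<partial>lborel)"
    by (rule nn_integral_cmult) (use Fm in measurable)
  also have "(\<integral>\<^sup>+t. F (\<Delta> + t) \<partial>lborel) = (\<integral>\<^sup>+t. F t \<partial>lborel)"
    using nn_integral_real_affine[OF Fm, of 1 \<Delta>] by simp
  also have "(\<integral>\<^sup>+t. F t \<partial>lborel) = emeasure (svt_mech logits ppub s \<sigma> \<tau> \<theta> x0 D') {y}"
    unfolding F_def by (rule MM_single[OF sg, symmetric])
  finally show ?thesis by (simp add: c)
qed

end


lemma sh_le: assumes "(u::real) \<ge> 0" shows "exp u - exp (- u) \<le> u * (exp u + exp (- u))"
proof -
  let ?g = "\<lambda>u::real. u * (exp u + exp (- u)) - (exp u - exp (- u))"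
  have "?g 0 \<le> ?g u"
  proof (rule DERIV_nonneg_imp_nondecreasing[OF assms])
    fix x :: real assume x: "0 \<le> x" "x \<le> u"
    have "DERIV ?g x :> (1 * (exp x + exp (- x)) + x * (exp x + exp (- x) * (- 1)) - (exp x - exp (- x) * (- 1)))"
      by (intro derivative_eq_intros) auto
    moreover have "1 * (exp x + exp (- x)) + x * (exp x + exp (- x) * (- 1)) - (exp x - exp (- x) * (- 1)) = x * (exp x - exp (- x))"
      by (simp add: algebra_simps)
    moreover have "x * (exp x - exp (- x)) \<ge> 0" using x by (intro mult_nonneg_nonneg) auto
    ultimately show "\<exists>y. DERIV ?g x :> y \<and> 0 \<le> y" by auto
  qed
  then show ?thesis by simp
qed

lemma psi_dec: assumes "0 \<le> (x::real)" "x \<le> y"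
  shows "(exp y + exp (- y)) * exp (- (y^2) / 2) \<le> (exp x + exp (- x)) * exp (- (x^2) / 2)"
proof -
  let ?p = "\<lambda>u::real. (exp u + exp (- u)) * exp (- (u^2) / 2)"
  show ?thesis
  proof (rule DERIV_nonpos_imp_nonincreasing[OF assms(2), of ?p])
    fix u :: real assume u: "x \<le> u" "u \<le> y"
    have "DERIV ?p u :> ((exp u + exp (- u) * (- 1)) * exp (- (u^2) / 2) + (exp u + exp (- u)) * (exp (- (u^2) / 2) * (- (2 * u) / 2)))"
      by (intro derivative_eq_intros) (auto simp: power2_eq_square)
    moreover have "(exp u + exp (- u) * (- 1)) * exp (- (u^2) / 2) + (exp u + exp (- u)) * (exp (- (u^2) / 2) * (- (2 * u) / 2))
       = exp (- (u^2) / 2) * ((exp u - exp (- u)) - u * (exp u + exp (- u)))"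
      by (simp add: algebra_simps)
    moreover have "exp (- (u^2) / 2) * ((exp u - exp (- u)) - u * (exp u + exp (- u))) \<le> 0"
      using sh_le[of u] u assms by (intro mult_nonneg_nonpos) auto
    ultimately show "\<exists>z. DERIV ?p u :> z \<and> z \<le> 0" by auto
  qed
qed

lemma key_ineq: assumes e: "(\<epsilon>::real) \<ge> 0" and a: "\<alpha> \<ge> 1"
  shows "(exp (\<alpha> * \<epsilon>) + exp \<epsilon> * exp (- \<alpha> * \<epsilon>)) / (1 + exp \<epsilon>) \<le> exp (\<alpha> * (\<alpha> - 1) * \<epsilon>^2 / 2)"
proof -
  define x where "x = \<epsilon> / 2"
  define y where "y = (\<alpha> - 1/2) * \<epsilon>"
  have xy: "0 \<le> x" "x \<le> y" using e a by (auto simp: x_def y_def intro: mult_right_mono[of "1/2" "\<alpha> - 1/2" \<epsilon>, simplified])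
  have num: "exp (\<alpha> * \<epsilon>) + exp \<epsilon> * exp (- \<alpha> * \<epsilon>) = exp x * (exp y + exp (- y))"
    by (simp add: x_def y_def exp_add[symmetric] algebra_simps)
  have den: "1 + exp \<epsilon> = exp x * (exp x + exp (- x))"
    by (simp add: x_def exp_add[symmetric] algebra_simps)
  have pos: "exp x + exp (- x) > 0" by (simp add: add_pos_pos)
  have ex: "exp (\<alpha> * (\<alpha> - 1) * \<epsilon>^2 / 2) = exp (y^2 / 2) * exp (- (x^2) / 2)"
  proof -
    have "\<alpha> * (\<alpha> - 1) * \<epsilon>^2 / 2 = y^2 / 2 + - (x^2) / 2"
      unfolding x_def y_def power2_eq_square by (simp add: field_simps)
    then show ?thesis by (simp only: exp_add[symmetric])
  qed
  have "(exp y + exp (- y)) * exp (- (y^2) / 2) \<le> (exp x + exp (- x)) * exp (- (x^2) / 2)"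
    by (rule psi_dec[OF xy])
  then have "(exp y + exp (- y)) * exp (- (y^2) / 2) * exp (y^2 / 2) \<le> (exp x + exp (- x)) * exp (- (x^2) / 2) * exp (y^2 / 2)"
    by (intro mult_right_mono) auto
  then have "exp y + exp (- y) \<le> (exp x + exp (- x)) * (exp (y^2 / 2) * exp (- (x^2) / 2))"
    by (simp add: mult.assoc exp_add[symmetric] algebra_simps)
  then have "(exp y + exp (- y)) / (exp x + exp (- x)) \<le> exp (y^2 / 2) * exp (- (x^2) / 2)"
    using pos by (simp add: divide_le_eq mult.commute)
  then show ?thesis unfolding num den ex using pos by simp
qed


lemma chord:
  fixes \<epsilon> \<alpha> :: real
  assumes e: "\<epsilon> > 0" and a: "\<alpha> > 1"
  obtains A B where "B \<ge> 0" "A + B = (exp (\<alpha> * \<epsilon>) + exp \<epsilon> * exp (- \<alpha> * \<epsilon>)) / (1 + exp \<epsilon>)"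
    "\<And>w. exp (- \<epsilon>) \<le> w \<Longrightarrow> w \<le> exp \<epsilon> \<Longrightarrow> w powr \<alpha> \<le> A + B * w"
proof -
  define w1 where "w1 = exp (- \<epsilon>)"
  define w2 where "w2 = exp \<epsilon>"
  define f where "f x = x powr \<alpha>" for x :: real
  define B where "B = (f w2 - f w1) / (w2 - w1)"
  define A where "A = f w1 - B * w1"
  have w12: "0 < w1" "w1 < w2" using e by (auto simp: w1_def w2_def)
  have fw1: "f w1 = exp (- (\<alpha> * \<epsilon>))" by (simp add: f_def w1_def powr_def)
  have fw2: "f w2 = exp (\<alpha> * \<epsilon>)" by (simp add: f_def w2_def powr_def)
  have "f w1 \<le> f w2" using w12 a unfolding f_def by (intro powr_mono2) auto
  then have B0: "B \<ge> 0" using w12 by (simp add: B_def)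
  have conv: "convex_on {w1..w2} f"
    unfolding f_def by (rule convex_on_subset[OF powr_convex]) (use a w12 in auto)
  have ch: "w powr \<alpha> \<le> A + B * w" if "w1 \<le> w" "w \<le> w2" for w
  proof -
    have h: "f w \<le> B * (w - w1) + f w1" unfolding B_def using convex_onD_Icc'[OF conv, of w] that by simp
    have "A + B * w = B * (w - w1) + f w1" by (simp add: A_def algebra_simps)
    then show ?thesis using h by (simp add: f_def)
  qed
  have "A + B = (exp (\<alpha> * \<epsilon>) + exp \<epsilon> * exp (- \<alpha> * \<epsilon>)) / (1 + exp \<epsilon>)"
  proof -
    define E where "E = exp \<epsilon>"
    define a' where "a' = exp (\<alpha> * \<epsilon>)"
    have E: "E > 1" using e by (simp add: E_def)
    have a': "a' > 0" by (simp add: a'_def)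
    have i1: "exp (- \<epsilon>) = 1 / E" by (simp add: E_def exp_minus field_simps)
    have i2: "exp (- (\<alpha> * \<epsilon>)) = 1 / a'" by (simp add: a'_def exp_minus field_simps)
    have s1: "A + B = f w1 + B * (1 - w1)" by (simp add: A_def algebra_simps)
    have s2: "B = (a' - 1 / a') / (E - 1 / E)"
      unfolding B_def fw1 fw2 unfolding w1_def w2_def i1 i2 E_def[symmetric] a'_def[symmetric] by simp
    have s3: "f w1 = 1 / a'" using fw1 i2 by simp
    have s4: "w1 = 1 / E" using i1 by (simp add: w1_def)
    have "A + B = 1 / a' + (a' - 1 / a') / (E - 1 / E) * (1 - 1 / E)"
      by (subst s1) (simp only: s2 s3, simp only: s4)
    also have "\<dots> = (a' + E * (1 / a')) / (1 + E)"
    proof -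
      have "1 * 1 < E * E" using E by (intro mult_strict_mono) auto
      then have Y: "E - 1 / E > 0" using E by (simp add: field_simps)
      have "E + E * E > 0" using E by (intro add_pos_pos mult_pos_pos) auto
      then have hE: "E + E * E \<noteq> 0" by simp
      have Z: "1 - 1 / E = (E - 1 / E) * (1 / (1 + E))" using E hE by (simp add: field_simps)
      have "(a' - 1 / a') / (E - 1 / E) * (1 - 1 / E) = (a' - 1 / a') * (1 / (1 + E))"
        unfolding Z using Y by simp
      moreover have "1 / a' + (a' - 1 / a') * (1 / (1 + E)) = (a' + E * (1 / a')) / (1 + E)"
      proof -
        have ne: "1 + E \<noteq> 0" using E by simp
        have "u + (a' - u) * (1 / (1 + E)) = (a' + E * u) / (1 + E)" for u
          using ne by (simp add: field_simps)
        then show ?thesis by blast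
      qed
      ultimately show ?thesis by simp
    qed
    finally show ?thesis by (simp add: E_def a'_def i2[unfolded a'_def])
  qed
  then show ?thesis using that[OF B0 _ ch] unfolding w1_def w2_def by blast
qed


lemma bs_sum:
  fixes p q :: "'b \<Rightarrow> real"
  assumes e: "\<epsilon> > 0" and a: "\<alpha> > 1"
    and pn: "\<And>y. 0 \<le> p y" and qn: "\<And>y. 0 \<le> q y"
    and r1: "\<And>y. p y \<le> exp \<epsilon> * q y" and r2: "\<And>y. q y \<le> exp \<epsilon> * p y"
    and sp: "(\<integral>\<^sup>+y. ennreal (p y) \<partial>count_space UNIV) = ennreal \<kappa>"
    and sq: "(\<integral>\<^sup>+y. ennreal (q y) \<partial>count_space UNIV) = ennreal \<kappa>"
    and k: "0 \<le> \<kappa>" "\<kappa> \<le> 1"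
  shows "(\<integral>\<^sup>+y. ennreal (p y powr \<alpha> * q y powr (1 - \<alpha>)) \<partial>count_space UNIV) \<le> ennreal (exp (\<alpha> * (\<alpha> - 1) * \<epsilon>^2 / 2))"
proof -
  define V where "V = (exp (\<alpha> * \<epsilon>) + exp \<epsilon> * exp (- \<alpha> * \<epsilon>)) / (1 + exp \<epsilon>)"
  obtain A B where B0: "B \<ge> 0" and AB: "A + B = V"
    and ch: "\<And>w. exp (- \<epsilon>) \<le> w \<Longrightarrow> w \<le> exp \<epsilon> \<Longrightarrow> w powr \<alpha> \<le> A + B * w"
    using chord[OF e a] unfolding V_def by blast
  define Ap where "Ap = max 0 A"
  define Am where "Am = max 0 (- A)"
  have Apm: "Ap - Am = A" "Ap \<ge> 0" "Am \<ge> 0" by (auto simp: Ap_def Am_def)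
  define T where "T y = p y powr \<alpha> * q y powr (1 - \<alpha>)" for y
  have T0: "T y \<ge> 0" for y by (simp add: T_def)
  have pt: "T y + Am * q y \<le> Ap * q y + B * p y" for y
  proof (cases "q y = 0")
    case True
    then have "p y = 0" using r1[of y] pn[of y] by simp
    then show ?thesis using True by (simp add: T_def)
  next
    case False
    then have qp: "q y > 0" using qn[of y] by (simp add: less_le)
    define w where "w = p y / q y"
    have pw: "p y = q y * w" using qp by (simp add: w_def)
    have "exp (- \<epsilon>) * q y \<le> exp (- \<epsilon>) * (exp \<epsilon> * p y)" using r2[of y] by (intro mult_left_mono) auto
    also have "\<dots> = p y" by (simp add: mult.assoc[symmetric] exp_minus_inverse[of \<epsilon>, unfolded mult.commute[of "exp \<epsilon>"]])
    finally have w1: "exp (- \<epsilon>) \<le> w" using qp by (simp add: w_def le_divide_eq)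
    have w2: "w \<le> exp \<epsilon>" using r1[of y] qp by (simp add: w_def divide_le_eq)
    have w0: "w \<ge> 0" using pn[of y] qn[of y] by (simp add: w_def)
    have "T y = q y * w powr \<alpha>"
    proof -
      have "T y = (q y * w) powr \<alpha> * q y powr (1 - \<alpha>)" by (simp add: T_def pw)
      also have "\<dots> = w powr \<alpha> * (q y powr \<alpha> * q y powr (1 - \<alpha>))"
        using qp w0 by (simp add: powr_mult)
      also have "q y powr \<alpha> * q y powr (1 - \<alpha>) = q y"
        using qp by (simp add: powr_add[symmetric])
      finally show ?thesis by simp
    qed
    also have "\<dots> \<le> q y * (A + B * w)" using ch[OF w1 w2] qp by (intro mult_left_mono) auto
    also have "\<dots> = A * q y + B * p y" by (simp add: pw algebra_simps)
    finally show ?thesis using Apm by (simp add: algebra_simps)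
  qed
  define S where "S = (\<integral>\<^sup>+y. ennreal (T y) \<partial>count_space UNIV)"
  have "S + ennreal (Am * \<kappa>) = (\<integral>\<^sup>+y. ennreal (T y) + ennreal Am * ennreal (q y) \<partial>count_space UNIV)"
    by (simp add: S_def nn_integral_add nn_integral_cmult sq ennreal_mult Apm k)
  also have "\<dots> \<le> (\<integral>\<^sup>+y. ennreal Ap * ennreal (q y) + ennreal B * ennreal (p y) \<partial>count_space UNIV)"
  proof (rule nn_integral_mono)
    fix y
    have "ennreal (T y) + ennreal Am * ennreal (q y) = ennreal (T y + Am * q y)"
      using T0[of y] Apm qn[of y] by (simp add: ennreal_plus ennreal_mult)
    also have "\<dots> \<le> ennreal (Ap * q y + B * p y)" by (rule ennreal_leI[OF pt])
    also have "\<dots> = ennreal Ap * ennreal (q y) + ennreal B * ennreal (p y)"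
      using Apm B0 qn[of y] pn[of y] by (simp add: ennreal_plus ennreal_mult)
    finally show "ennreal (T y) + ennreal Am * ennreal (q y) \<le> ennreal Ap * ennreal (q y) + ennreal B * ennreal (p y)" .
  qed
  also have "\<dots> = ennreal (Ap * \<kappa> + B * \<kappa>)"
    by (simp add: nn_integral_add nn_integral_cmult sq sp ennreal_mult ennreal_plus Apm B0 k)
  finally have I: "S + ennreal (Am * \<kappa>) \<le> ennreal (Ap * \<kappa> + B * \<kappa>)" .
  have "S \<noteq> \<top>"
  proof
    assume "S = \<top>"
    then show False using I by (simp add: top_unique)
  qed
  then obtain s where s: "S = ennreal s" "s \<ge> 0" by (cases S) auto
  have "s + Am * \<kappa> \<le> Ap * \<kappa> + B * \<kappa>"
    using I s Apm k B0 by (simp add: ennreal_plus[symmetric] del: ennreal_plus)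
  then have "s \<le> (Ap - Am + B) * \<kappa>" by (simp add: algebra_simps)
  then have "s \<le> V * \<kappa>" using Apm AB by simp
  also have "V * \<kappa> \<le> V"
  proof -
    have "0 < 1 + exp \<epsilon>" by (simp add: add_pos_pos)
    then have "V \<ge> 0" unfolding V_def by (intro divide_nonneg_pos add_nonneg_nonneg mult_nonneg_nonneg) auto
    then show ?thesis using k by (simp add: mult_left_le)
  qed
  also have "V \<le> exp (\<alpha> * (\<alpha> - 1) * \<epsilon>^2 / 2)"
    unfolding V_def by (rule key_ineq) (use e a in auto)
  finally show ?thesis using s by (simp add: S_def T_def ennreal_leI)
qed


lemma MM_finite_single:
  assumes sg: "\<sigma> > 0"
  shows "ennreal (measure (svt_mech logits ppub s \<sigma> \<tau> \<theta> x0 D) {y}) = emeasure (svt_mech logits ppub s \<sigma> \<tau> \<theta> x0 D) {y}"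
proof -
  have "emeasure (svt_mech logits ppub s \<sigma> \<tau> \<theta> x0 D) {y} \<le> emeasure (svt_mech logits ppub s \<sigma> \<tau> \<theta> x0 D) UNIV"
    by (rule emeasure_mono) (auto simp: sets_MM[OF sg])
  also have "\<dots> = emeasure (laplace_measure \<theta> \<sigma>) UNIV" by (rule MM_total[OF sg])
  also have "\<dots> \<le> 1" by (rule lap_total[OF sg])
  finally have "emeasure (svt_mech logits ppub s \<sigma> \<tau> \<theta> x0 D) {y} \<noteq> \<top>"
    by (metis ennreal_one_neq_top top.extremum_uniqueI)
  then show ?thesis by (simp add: emeasure_eq_ennreal_measure)
qed

lemma MM_sum:
  assumes sg: "\<sigma> > 0"
  shows "(\<integral>\<^sup>+y. ennreal (measure (svt_mech logits ppub s \<sigma> \<tau> \<theta> x0 D) {y}) \<partial>count_space UNIV) = emeasure (laplace_measure \<theta> \<sigma>) UNIV"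
proof -
  have "(\<integral>\<^sup>+y. ennreal (measure (svt_mech logits ppub s \<sigma> \<tau> \<theta> x0 D) {y}) \<partial>count_space UNIV)
      = (\<integral>\<^sup>+y. emeasure (svt_mech logits ppub s \<sigma> \<tau> \<theta> x0 D) {y} \<partial>count_space UNIV)"
    by (simp add: MM_finite_single[OF sg])
  also have "\<dots> = emeasure (svt_mech logits ppub s \<sigma> \<tau> \<theta> x0 D) UNIV"
    by (rule emeasure_countable_singleton[symmetric]) (auto simp: sets_MM[OF sg])
  also have "\<dots> = emeasure (laplace_measure \<theta> \<sigma>) UNIV" by (rule MM_total[OF sg])
  finally show ?thesis .
qed

lemma MM_ratio_real:
  assumes sg: "\<sigma> > 0" and s: "s > 0" and fin: "finite D" "finite D'" and nb: "neighbors D D'"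
  shows "measure (svt_mech logits ppub s \<sigma> \<tau> \<theta> x0 D) {y} \<le> exp (2 / (s * \<sigma>)) * measure (svt_mech logits ppub s \<sigma> \<tau> \<theta> x0 D') {y}"
proof -
  have "ennreal (measure (svt_mech logits ppub s \<sigma> \<tau> \<theta> x0 D) {y}) \<le> ennreal (exp (2 / (s * \<sigma>))) * ennreal (measure (svt_mech logits ppub s \<sigma> \<tau> \<theta> x0 D') {y})"
    unfolding MM_finite_single[OF sg] by (rule MM_ratio[OF sg s fin nb])
  then have "ennreal (measure (svt_mech logits ppub s \<sigma> \<tau> \<theta> x0 D) {y}) \<le> ennreal (exp (2 / (s * \<sigma>)) * measure (svt_mech logits ppub s \<sigma> \<tau> \<theta> x0 D') {y})"
    by (simp add: ennreal_mult)
  then show ?thesis by (subst (asm) ennreal_le_iff) auto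
qed

theorem mainTheorem5:
  fixes logits :: "'a::finite list \<Rightarrow> 'a \<Rightarrow> real"
    and ppub x0 :: "'a list"
    and s \<sigma> \<tau> \<theta> :: real
  assumes "s > 0" and "\<sigma> > 0" and "\<tau> > 0"
  shows "zCDP (svt_mech logits ppub s \<sigma> \<tau> \<theta> x0) (2 / (s * \<sigma>)^2)"
  unfolding zCDP_def
proof (intro allI impI)
  note s = \<open>s > 0\<close> and sg = \<open>\<sigma> > 0\<close>
  fix \<alpha> :: real and D D' :: "'a list set"
  assume a: "\<alpha> > 1" and H: "finite D \<and> finite D' \<and> neighbors D D'"
  define P where "P = svt_mech logits ppub s \<sigma> \<tau> \<theta> x0 D"
  define Q where "Q = svt_mech logits ppub s \<sigma> \<tau> \<theta> x0 D'"
  define \<epsilon> where "\<epsilon> = 2 / (s * \<sigma>)"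
  have e: "\<epsilon> > 0" using s sg by (simp add: \<epsilon>_def)
  define \<kappa> where "\<kappa> = enn2real (emeasure (laplace_measure \<theta> \<sigma>) UNIV)"
  have kle: "emeasure (laplace_measure \<theta> \<sigma>) UNIV \<le> 1" by (rule lap_total[OF sg])
  then have kfin: "emeasure (laplace_measure \<theta> \<sigma>) UNIV \<noteq> \<top>" by (metis ennreal_one_neq_top top.extremum_uniqueI)
  then have keq: "emeasure (laplace_measure \<theta> \<sigma>) UNIV = ennreal \<kappa>" by (simp add: \<kappa>_def ennreal_enn2real_if)
  have k1: "0 \<le> \<kappa>" by (simp add: \<kappa>_def)
  have k2: "\<kappa> \<le> 1" using kle unfolding keq by simp
  note k = k1 k2
  have nb': "neighbors D' D" using H by (auto simp: neighbors_def)
  have r1: "measure P {y} \<le> exp \<epsilon> * measure Q {y}" for y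
    unfolding P_def Q_def \<epsilon>_def using H by (intro MM_ratio_real[OF sg s]) auto
  have r2: "measure Q {y} \<le> exp \<epsilon> * measure P {y}" for y
    unfolding P_def Q_def \<epsilon>_def using H nb' by (intro MM_ratio_real[OF sg s]) auto
  define S where "S = (\<integral>\<^sup>+ x. ennreal (measure P {x} powr \<alpha> * measure Q {x} powr (1 - \<alpha>)) \<partial>count_space UNIV)"
  have SB: "S \<le> ennreal (exp (\<alpha> * (\<alpha> - 1) * \<epsilon>^2 / 2))"
    unfolding S_def
  proof (rule bs_sum[OF e a _ _ r1 r2])
    show "(\<integral>\<^sup>+y. ennreal (measure P {y}) \<partial>count_space UNIV) = ennreal \<kappa>"
      unfolding P_def MM_sum[OF sg] keq ..
    show "(\<integral>\<^sup>+y. ennreal (measure Q {y}) \<partial>count_space UNIV) = ennreal \<kappa>"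
      unfolding Q_def MM_sum[OF sg] keq ..
  qed (use k in auto)
  have nz: "\<not> (\<exists>x. measure P {x} > 0 \<and> measure Q {x} = 0)"
  proof
    assume "\<exists>x. measure P {x} > 0 \<and> measure Q {x} = 0"
    then obtain x where "measure P {x} > 0" "measure Q {x} = 0" by blast
    with r1[of x] show False by simp
  qed
  have Sfin: "S \<noteq> \<infinity>" using SB by (auto simp: top_unique)
  obtain sv where sv: "S = ennreal sv" "sv \<ge> 0" using Sfin by (cases S) auto
  have svle: "sv \<le> exp (\<alpha> * (\<alpha> - 1) * \<epsilon>^2 / 2)" using SB sv by simp
  have "ln sv / (\<alpha> - 1) \<le> 2 / (s * \<sigma>)^2 * \<alpha>"
  proof (cases "sv = 0")
    case True
    then show ?thesis using a s sg by simp
  next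
    case False
    then have "sv > 0" using sv by simp
    then have "ln sv \<le> ln (exp (\<alpha> * (\<alpha> - 1) * \<epsilon>^2 / 2))" using svle by (subst ln_le_cancel_iff) auto
    then have "ln sv \<le> \<alpha> * (\<alpha> - 1) * \<epsilon>^2 / 2" by simp
    then have "ln sv / (\<alpha> - 1) \<le> (\<alpha> * (\<alpha> - 1) * \<epsilon>^2 / 2) / (\<alpha> - 1)" using a by (intro divide_right_mono) auto
    also have "\<dots> = \<alpha> * \<epsilon>^2 / 2"
    proof -
      have "\<alpha> - 1 \<noteq> 0" using a by simp
      then show ?thesis by (simp add: field_simps)
    qed
    also have "\<dots> = 2 / (s * \<sigma>)^2 * \<alpha>"
    proof -
      have "s \<noteq> 0" "\<sigma> \<noteq> 0" using s sg by auto
      then show ?thesis unfolding \<epsilon>_def by (simp add: power2_eq_square field_simps)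
    qed
    finally show ?thesis .
  qed
  then show "renyi_div \<alpha> (svt_mech logits ppub s \<sigma> \<tau> \<theta> x0 D) (svt_mech logits ppub s \<sigma> \<tau> \<theta> x0 D') \<le> ereal (2 / (s * \<sigma>)^2 * \<alpha>)"
    unfolding renyi_div_def Let_def P_def[symmetric] Q_def[symmetric] S_def[symmetric]
    using nz Sfin sv by simp
qed


end
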